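(* Let $m \geq 1$ be an integer, let $p=(p_1,\dots,p_m)$ be a probability distribution on $\{1,\dots,m\}$, and let $k \geq 1$ be an integer. Throw balls one at a time independently into $m$ bins, each ball landing in bin $i$ with probability $p_i$, and let $T_k$ be the number of balls thrown until some bin first contains $k$ balls. Then, with $\|p\|_k = \left(\sum_{i=1}^m p_i^k\right)^{1/k}$, \[ \left(\frac{1}{e}\right)\left(\frac{k}{k+1}\right)\frac{k}{\|p\|_k} \;\leq\; \mathbb{E}\,T_k \;\leq\; \frac{k}{\|p\|_k}. \] *)

theory Defs
  imports "HOL-Probability.Probability"
begin

text \<open>Balls are thrown independently; ball number j (0-based) lands in bin \<open>\<omega> !! j\<close>.
  \<open>balls_until k \<omega>\<close> is the number of balls thrown until some bin first contains k balls,
  i.e. the least n such that among the first n balls some bin received at least k.\<close>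
definition balls_until :: "nat \<Rightarrow> nat stream \<Rightarrow> nat" where
  "balls_until k \<omega> = (LEAST n. \<exists>i. k \<le> card {j. j < n \<and> \<omega> !! j = i})"

end

theory Submission
  imports Defs "HOL-Computational_Algebra.Polynomial"
begin

primrec Ep :: "nat \<Rightarrow> real \<Rightarrow> real poly" where
  "Ep 0 q = 0"
| "Ep (Suc r) q = Ep r q + monom (q ^ r / fact r) r"

lemma poly_Ep: "poly (Ep r q) t = (\<Sum>j<r. (q * t) ^ j / fact j)"
  by (induction r) (auto simp: poly_monom power_mult_distrib)

lemma pderiv_Ep: "pderiv (Ep (Suc r) q) = smult q (Ep r q)"
proof (induction r)
  case 0
  then show ?case by (simp add: pderiv_monom)
next
  case (Suc r)
  have "pderiv (Ep (Suc (Suc r)) q) = smult q (Ep r q) + monom (of_nat (Suc r) * (q ^ Suc r / fact (Suc r))) r"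
    using Suc by (simp add: pderiv_add pderiv_monom)
  also have "of_nat (Suc r) * (q ^ Suc r / fact (Suc r)) = q * (q ^ r / fact r)"
    unfolding fact_Suc by (simp del: of_nat_Suc)
  finally show ?case by (simp add: smult_add_right smult_monom)
qed

lemma coeff_Ep_nonneg: "q \<ge> 0 \<Longrightarrow> coeff (Ep r q) n \<ge> 0"
  by (induction r) (auto simp: coeff_monom)

lemma poly_Ep_0: "poly (Ep (Suc r) q) 0 = 1"
  by (simp only: poly_Ep) (simp add: sum.lessThan_Suc_shift del: sum.lessThan_Suc)

declare Ep.simps(2)[simp del]

definition nnc :: "real poly \<Rightarrow> bool" where "nnc f \<longleftrightarrow> (\<forall>n. coeff f n \<ge> 0)"

lemma nnc_mult: "nnc f \<Longrightarrow> nnc g \<Longrightarrow> nnc (f * g)"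
  unfolding nnc_def by (auto simp: coeff_mult intro!: sum_nonneg)

lemma nnc_prod: "(\<And>i. i \<in> A \<Longrightarrow> nnc (f i)) \<Longrightarrow> nnc (\<Prod>i\<in>A. f i)"
proof (induction A rule: infinite_finite_induct)
  case (insert x F)
  then show ?case by (simp add: nnc_mult)
qed (simp_all add: nnc_def coeff_1)

lemma nnc_Ep: "q \<ge> 0 \<Longrightarrow> nnc (Ep r q)"
  by (simp add: nnc_def coeff_Ep_nonneg)

definition Lf :: "real poly \<Rightarrow> real" where "Lf f = (\<Sum>n\<le>degree f. coeff f n * fact n)"

lemma Lf_bound: "degree f \<le> N \<Longrightarrow> Lf f = (\<Sum>n\<le>N. coeff f n * fact n)"
  unfolding Lf_def by (intro sum.mono_neutral_left) (auto simp: coeff_eq_0)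

lemma Lf_add: "Lf (f + g) = Lf f + Lf g"
proof -
  let ?N = "max (degree f) (degree g)"
  have "degree (f + g) \<le> ?N" by (rule degree_add_le) auto
  then show ?thesis
    by (simp add: Lf_bound[of _ ?N] sum.distrib algebra_simps)
qed

lemma Lf_smult: "Lf (smult a f) = a * Lf f"
  by (simp add: Lf_bound[of "smult a f" "degree f"] Lf_def sum_distrib_left algebra_simps)

lemma Lf_0: "Lf 0 = 0" by (simp add: Lf_def)

lemma Lf_sum: "Lf (\<Sum>i\<in>A. f i) = (\<Sum>i\<in>A. Lf (f i))"
  by (induction A rule: infinite_finite_induct) (simp_all add: Lf_add Lf_0)

lemma Lf_nonneg: "nnc f \<Longrightarrow> Lf f \<ge> 0"
  unfolding Lf_def nnc_def by (auto intro!: sum_nonneg)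

lemma Lf_pderiv: "Lf f = poly f 0 + Lf (pderiv f)"
proof -
  let ?N = "degree f"
  have d: "degree (pderiv f) \<le> ?N" by (simp add: degree_pderiv)
  have "Lf (pderiv f) = (\<Sum>n\<le>?N. of_nat (Suc n) * coeff f (Suc n) * fact n)"
    by (simp add: Lf_bound[OF d] coeff_pderiv)
  also have "\<dots> = (\<Sum>n<Suc ?N. coeff f (Suc n) * fact (Suc n))"
    by (intro sum.cong) (auto simp: lessThan_Suc_atMost)
  finally have 1: "Lf (pderiv f) = (\<Sum>n<Suc ?N. coeff f (Suc n) * fact (Suc n))" .
  have "Lf f = (\<Sum>n\<le>Suc ?N. coeff f n * fact n)" by (rule Lf_bound) simp
  also have "\<dots> = coeff f 0 + (\<Sum>n<Suc ?N. coeff f (Suc n) * fact (Suc n))"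
    by (subst sum.atMost_Suc_shift) (simp add: atLeast0AtMost lessThan_Suc_atMost)
  finally show ?thesis using 1 by (simp add: poly_0_coeff_0)
qed

definition Fp :: "(nat \<Rightarrow> real) \<Rightarrow> nat \<Rightarrow> nat \<Rightarrow> (nat \<Rightarrow> nat) \<Rightarrow> real poly" where
  "Fp p m k c = (\<Prod>i\<in>{1..m}. Ep (k - c i) (p i))"

lemma Fp_remove:
  assumes "x \<in> {1..m}"
  shows "Fp p m k c = Ep (k - c x) (p x) * (\<Prod>i\<in>{1..m} - {x}. Ep (k - c i) (p i))"
  unfolding Fp_def using assms by (simp add: prod.remove)

lemma Lf_Fp_rec:
  assumes "\<And>i. c i < k"
  shows "Lf (Fp p m k c) = 1 + (\<Sum>x\<in>{1..m}. p x * Lf (Fp p m k (c(x := Suc (c x)))))"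
proof -
  have ksuc: "k - c i = Suc (k - Suc (c i))" for i using assms[of i] by linarith
  have "poly (Fp p m k c) 0 = 1"
    unfolding Fp_def poly_prod by (intro prod.neutral ballI) (simp add: ksuc poly_Ep_0)
  moreover have "pderiv (Fp p m k c) = (\<Sum>x\<in>{1..m}. smult (p x) (Fp p m k (c(x := Suc (c x)))))"
  proof -
    have "pderiv (Fp p m k c) = (\<Sum>x\<in>{1..m}. (\<Prod>i\<in>{1..m} - {x}. Ep (k - c i) (p i)) * pderiv (Ep (k - c x) (p x)))"
      unfolding Fp_def by (rule pderiv_prod)
    also have "\<dots> = (\<Sum>x\<in>{1..m}. smult (p x) (Fp p m k (c(x := Suc (c x)))))"
    proof (intro sum.cong refl)
      fix x assume x: "x \<in> {1..m}"
      have "(\<Prod>i\<in>{1..m} - {x}. Ep (k - (c(x := Suc (c x))) i) (p i)) = (\<Prod>i\<in>{1..m} - {x}. Ep (k - c i) (p i))"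
        by (intro prod.cong) auto
      then show "(\<Prod>i\<in>{1..m} - {x}. Ep (k - c i) (p i)) * pderiv (Ep (k - c x) (p x)) = smult (p x) (Fp p m k (c(x := Suc (c x))))"
        using Fp_remove[OF x, of p k "c(x := Suc (c x))"]
        by (simp add: ksuc[of x] pderiv_Ep mult.commute)
    qed
    finally show ?thesis .
  qed
  ultimately show ?thesis
    by (subst Lf_pderiv) (simp add: Lf_sum Lf_smult)
qed


lemma nn_integral_Lf:
  assumes "nnc f"
  shows "(\<integral>\<^sup>+t. ennreal (exp (-t) * poly f t) * indicator {0..} t \<partial>lborel) = ennreal (Lf f)"
proof -
  have c: "coeff f n \<ge> 0" for n using assms by (simp add: nnc_def)
  have eq: "ennreal (exp (-t) * poly f t) * indicator {0..} t =
     (\<Sum>n\<le>degree f. ennreal (coeff f n) * (ennreal (t^n * exp (-t)) * indicator {0..} t))" for t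
  proof (cases "t \<ge> 0")
    case True
    have "exp (-t) * poly f t = (\<Sum>n\<le>degree f. coeff f n * (t^n * exp (-t)))"
      by (simp add: poly_altdef sum_distrib_left mult_ac)
    then show ?thesis using True c
      by (simp add: ennreal_mult sum_ennreal[symmetric] sum_nonneg indicator_def)
  qed (simp add: indicator_def)
  have "(\<integral>\<^sup>+t. ennreal (exp (-t) * poly f t) * indicator {0..} t \<partial>lborel) =
     (\<Sum>n\<le>degree f. ennreal (coeff f n) * (\<integral>\<^sup>+t. ennreal (t^n * exp (-t)) * indicator {0..} t \<partial>lborel))"
    unfolding eq by (subst nn_integral_sum) (auto simp: nn_integral_cmult)
  also have "\<dots> = (\<Sum>n\<le>degree f. ennreal (coeff f n * fact n))"
    by (simp add: nn_intergal_power_times_exp_Ici ennreal_mult c)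
  also have "\<dots> = ennreal (Lf f)"
    unfolding Lf_def using c by (simp add: sum_ennreal)
  finally show ?thesis .
qed


definition Pr :: "nat \<Rightarrow> (nat \<Rightarrow> nat) \<Rightarrow> nat stream \<Rightarrow> nat \<Rightarrow> bool" where
  "Pr k c \<omega> n \<longleftrightarrow> (\<exists>i. k \<le> c i + count (mset (stake n \<omega>)) i)"

definition TT :: "nat \<Rightarrow> (nat \<Rightarrow> nat) \<Rightarrow> nat stream \<Rightarrow> ennreal" where
  "TT k c \<omega> = (if \<exists>n. Pr k c \<omega> n then of_nat (LEAST n. Pr k c \<omega> n) else \<infinity>)"

lemma Pr_Suc: "Pr k c (x ## \<omega>) (Suc n) = Pr k (c(x := Suc (c x))) \<omega> n"
  unfolding Pr_def by (rule iffI) (auto split: if_splits)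

lemma Pr_0: "(\<And>i. c i < k) \<Longrightarrow> \<not> Pr k c \<omega> 0"
  unfolding Pr_def by (auto simp: not_le)

lemma TT_Cons:
  assumes "\<And>i. c i < k"
  shows "TT k c (x ## \<omega>) = 1 + (if k \<le> Suc (c x) then 0 else TT k (c(x := Suc (c x))) \<omega>)"
proof -
  let ?c = "c(x := Suc (c x))"
  have n0: "\<not> Pr k c (x ## \<omega>) 0" by (rule Pr_0[OF assms])
  show ?thesis
  proof (cases "k \<le> Suc (c x)")
    case True
    then have "Pr k c (x ## \<omega>) 1" unfolding One_nat_def Pr_Suc by (auto simp: Pr_def intro!: exI[of _ x])
    then have "(LEAST n. Pr k c (x ## \<omega>) n) = 1"
    proof (rule Least_equality)
      fix y assume "Pr k c (x ## \<omega>) y" then show "1 \<le> y" using n0 by (cases y) auto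
    qed
    then show ?thesis using True \<open>Pr k c (x ## \<omega>) 1\<close> by (auto simp: TT_def)
  next
    case False
    show ?thesis
    proof (cases "\<exists>n. Pr k ?c \<omega> n")
      case True
      then obtain n where n: "Pr k ?c \<omega> n" by blast
      then have n': "Pr k c (x ## \<omega>) (Suc n)" by (simp add: Pr_Suc)
      have "(LEAST n. Pr k c (x ## \<omega>) n) = Suc (LEAST n. Pr k c (x ## \<omega>) (Suc n))"
        by (rule Least_Suc[OF n' n0])
      moreover have ex: "\<exists>n. Pr k c (x ## \<omega>) n" using n' by blast
      ultimately show ?thesis using False True unfolding TT_def by (simp add: Pr_Suc add.commute)
    next
      case nex: False
      have "\<not> (\<exists>n. Pr k c (x ## \<omega>) n)"
      proof
        assume "\<exists>n. Pr k c (x ## \<omega>) n"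
        then obtain n where "Pr k c (x ## \<omega>) n" by blast
        with n0 nex show False by (cases n) (auto simp: Pr_Suc)
      qed
      then show ?thesis using False nex by (simp add: TT_def)
    qed
  qed
qed

lemma sets_S: "sets (stream_space (measure_pmf P)) = sets (stream_space (count_space UNIV))"
  by (rule sets_stream_space_cong) simp

lemma measurable_Pr[measurable]:
  "(\<lambda>\<omega>. Pr k c \<omega> n) \<in> measurable (stream_space (measure_pmf P)) (count_space UNIV)"
proof -
  have "(\<lambda>\<omega>. (\<lambda>xs. \<exists>i. k \<le> c i + count (mset xs) i) (stake n \<omega>)) \<in> measurable (stream_space (count_space UNIV)) (count_space UNIV)"
    by (rule measurable_compose[OF measurable_stake]) simp
  then show ?thesis
    unfolding Pr_def by (subst measurable_cong_sets[OF sets_S refl])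
qed

lemma measurable_TT[measurable]:
  "TT k c \<in> borel_measurable (stream_space (measure_pmf P))"
  unfolding TT_def by measurable


abbreviation "SP P \<equiv> stream_space (measure_pmf P)"

lemma ET_rec:
  assumes c: "\<And>i. c i < k" and P: "set_pmf P \<subseteq> {1..m}"
  shows "(\<integral>\<^sup>+\<omega>. TT k c \<omega> \<partial>SP P) =
    (\<Sum>x\<in>{1..m}. (1 + (if k \<le> Suc (c x) then 0 else (\<integral>\<^sup>+\<omega>. TT k (c(x := Suc (c x))) \<omega> \<partial>SP P))) * pmf P x)"
proof -
  interpret S: prob_space "SP P" by (rule prob_space.prob_space_stream_space) (rule measure_pmf.prob_space_axioms)
  have "(\<integral>\<^sup>+\<omega>. TT k c \<omega> \<partial>SP P) = (\<integral>\<^sup>+x. (\<integral>\<^sup>+\<omega>. TT k c (x ## \<omega>) \<partial>SP P) \<partial>measure_pmf P)"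
    by (rule prob_space.nn_integral_stream_space[OF measure_pmf.prob_space_axioms]) measurable
  also have "\<dots> = (\<integral>\<^sup>+x. 1 + (if k \<le> Suc (c x) then 0 else (\<integral>\<^sup>+\<omega>. TT k (c(x := Suc (c x))) \<omega> \<partial>SP P)) \<partial>measure_pmf P)"
  proof (intro nn_integral_cong)
    fix x
    have "(\<integral>\<^sup>+\<omega>. TT k c (x ## \<omega>) \<partial>SP P) = (\<integral>\<^sup>+\<omega>. 1 + (if k \<le> Suc (c x) then 0 else TT k (c(x := Suc (c x))) \<omega>) \<partial>SP P)"
      by (simp add: TT_Cons[OF c])
    also have "\<dots> = (\<integral>\<^sup>+\<omega>. 1 \<partial>SP P) + (\<integral>\<^sup>+\<omega>. (if k \<le> Suc (c x) then 0 else TT k (c(x := Suc (c x))) \<omega>) \<partial>SP P)"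
      by (rule nn_integral_add) auto
    also have "\<dots> = 1 + (if k \<le> Suc (c x) then 0 else (\<integral>\<^sup>+\<omega>. TT k (c(x := Suc (c x))) \<omega> \<partial>SP P))"
      by (simp add: S.emeasure_space_1)
    finally show "(\<integral>\<^sup>+\<omega>. TT k c (x ## \<omega>) \<partial>SP P) = 1 + (if k \<le> Suc (c x) then 0 else (\<integral>\<^sup>+\<omega>. TT k (c(x := Suc (c x))) \<omega> \<partial>SP P))" .
  qed
  also have "\<dots> = (\<Sum>x\<in>{1..m}. (1 + (if k \<le> Suc (c x) then 0 else (\<integral>\<^sup>+\<omega>. TT k (c(x := Suc (c x))) \<omega> \<partial>SP P))) * pmf P x)"
    by (rule nn_integral_measure_pmf_support) (use P in auto)
  finally show ?thesis .
qed

lemma nnc_Fp: "(\<And>i. p i \<ge> 0) \<Longrightarrow> nnc (Fp p m k c)"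
  unfolding Fp_def by (intro nnc_prod nnc_Ep) auto

lemma ET_eq_aux:
  assumes P: "set_pmf P \<subseteq> {1..m}"
  shows "\<forall>c. (\<forall>i. c i < k) \<longrightarrow> (\<Sum>i\<in>{1..m}. k - c i) = N \<longrightarrow>
     (\<integral>\<^sup>+\<omega>. TT k c \<omega> \<partial>SP P) = ennreal (Lf (Fp (pmf P) m k c))"
proof (induction N rule: less_induct)
  case (less N)
  show ?case
  proof (intro allI impI)
    fix c :: "nat \<Rightarrow> nat" assume c: "\<forall>i. c i < k" and N: "(\<Sum>i\<in>{1..m}. k - c i) = N"
    let ?L = "\<lambda>x. Lf (Fp (pmf P) m k (c(x := Suc (c x))))"
    have Lnn: "?L x \<ge> 0" for x by (intro Lf_nonneg nnc_Fp) simp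
    have trm: "(1 + (if k \<le> Suc (c x) then 0 else (\<integral>\<^sup>+\<omega>. TT k (c(x := Suc (c x))) \<omega> \<partial>SP P))) * pmf P x
        = ennreal ((1 + ?L x) * pmf P x)" if x: "x \<in> {1..m}" for x
    proof (cases "k \<le> Suc (c x)")
      case True
      then have "k - Suc (c x) = 0" by simp
      then have "Fp (pmf P) m k (c(x := Suc (c x))) = 0"
        using Fp_remove[OF x, of "pmf P" k "c(x := Suc (c x))"] by simp
      then have "?L x = 0" by (simp add: Lf_0)
      then show ?thesis using True by (simp add: ennreal_mult)
    next
      case False
      have "\<forall>i. (c(x := Suc (c x))) i < k" using c False by auto
      moreover have "(\<Sum>i\<in>{1..m}. k - (c(x := Suc (c x))) i) < N"
        unfolding N[symmetric]
      proof (rule sum_strict_mono_ex1)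
        show "\<forall>i\<in>{1..m}. k - (c(x := Suc (c x))) i \<le> k - c i" by auto
        show "\<exists>i\<in>{1..m}. k - (c(x := Suc (c x))) i < k - c i" using x False by (intro bexI[of _ x]) auto
      qed simp
      ultimately have "(\<integral>\<^sup>+\<omega>. TT k (c(x := Suc (c x))) \<omega> \<partial>SP P) = ennreal (?L x)"
        using less.IH by blast
      then show ?thesis using False Lnn[of x] by (simp add: ennreal_mult ennreal_plus)
    qed
    have "(\<integral>\<^sup>+\<omega>. TT k c \<omega> \<partial>SP P) = (\<Sum>x\<in>{1..m}. ennreal ((1 + ?L x) * pmf P x))"
      using ET_rec[of c k P m] c P trm by simp
    also have "\<dots> = ennreal (\<Sum>x\<in>{1..m}. (1 + ?L x) * pmf P x)"
      using Lnn by (intro sum_ennreal) auto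
    also have "(\<Sum>x\<in>{1..m}. (1 + ?L x) * pmf P x) = (\<Sum>x\<in>{1..m}. pmf P x) + (\<Sum>x\<in>{1..m}. pmf P x * ?L x)"
      by (simp add: sum.distrib algebra_simps)
    also have "(\<Sum>x\<in>{1..m}. pmf P x) = 1" by (rule sum_pmf_eq_1) (use P in auto)
    also have "1 + (\<Sum>x\<in>{1..m}. pmf P x * ?L x) = Lf (Fp (pmf P) m k c)"
      using Lf_Fp_rec[of c k "pmf P" m] c by simp
    finally show "(\<integral>\<^sup>+\<omega>. TT k c \<omega> \<partial>SP P) = ennreal (Lf (Fp (pmf P) m k c))" .
  qed
qed


lemma card_eq_count: "card {j. j < n \<and> \<omega> !! j = i} = count (mset (stake n \<omega>)) i"
proof -
  have "count (mset (stake n \<omega>)) i = card {j. j < n \<and> i = stake n \<omega> ! j}"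
    by (simp add: count_mset count_list_eq_length_filter length_filter_conv_card)
  also have "{j. j < n \<and> i = stake n \<omega> ! j} = {j. j < n \<and> \<omega> !! j = i}" by auto
  finally show ?thesis by simp
qed

lemma balls_until_Pr: "balls_until k = (\<lambda>\<omega>. LEAST n. Pr k (\<lambda>_. 0) \<omega> n)"
  by (auto simp: balls_until_def Pr_def card_eq_count fun_eq_iff)

lemma integral_balls_until:
  assumes k: "k \<ge> 1" and P: "set_pmf P \<subseteq> {1..m}"
  shows "(\<integral>\<omega>. real (balls_until k \<omega>) \<partial>SP P) = Lf (Fp (pmf P) m k (\<lambda>_. 0))"
proof -
  have ET: "(\<integral>\<^sup>+\<omega>. TT k (\<lambda>_. 0) \<omega> \<partial>SP P) = ennreal (Lf (Fp (pmf P) m k (\<lambda>_. 0)))"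
    using ET_eq_aux[OF P] k by auto
  have "AE \<omega> in SP P. TT k (\<lambda>_. 0) \<omega> \<noteq> \<infinity>"
    by (rule nn_integral_PInf_AE) (auto simp: ET)
  then have AE: "AE \<omega> in SP P. ennreal (real (balls_until k \<omega>)) = TT k (\<lambda>_. 0) \<omega>"
    by eventually_elim (auto simp: TT_def balls_until_Pr ennreal_of_nat_eq_real_of_nat split: if_splits)
  have meas: "(\<lambda>\<omega>. real (balls_until k \<omega>)) \<in> borel_measurable (SP P)"
    unfolding balls_until_Pr by measurable
  have "(\<integral>\<omega>. real (balls_until k \<omega>) \<partial>SP P) = enn2real (\<integral>\<^sup>+\<omega>. ennreal (real (balls_until k \<omega>)) \<partial>SP P)"
    by (rule integral_eq_nn_integral[OF meas]) auto
  also have "(\<integral>\<^sup>+\<omega>. ennreal (real (balls_until k \<omega>)) \<partial>SP P) = (\<integral>\<^sup>+\<omega>. TT k (\<lambda>_. 0) \<omega> \<partial>SP P)"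
    by (rule nn_integral_cong_AE[OF AE])
  finally show ?thesis using ET Lf_nonneg[OF nnc_Fp[of "pmf P" m k "\<lambda>_. 0"]] by simp
qed

lemma Lf_Fp0_integral:
  assumes "\<And>i. p i \<ge> 0"
  shows "ennreal (Lf (Fp p m k (\<lambda>_. 0))) =
    (\<integral>\<^sup>+t. ennreal (exp (-t) * (\<Prod>i\<in>{1..m}. (\<Sum>j<k. (p i * t) ^ j / fact j))) * indicator {0..} t \<partial>lborel)"
  by (subst nn_integral_Lf[OF nnc_Fp[OF assms], symmetric]) (simp add: Fp_def poly_prod poly_Ep)


definition En :: "nat \<Rightarrow> real \<Rightarrow> real" where "En r x = (\<Sum>j<r. x ^ j / fact j)"

lemma En_Suc: "En (Suc r) x = En r x + x ^ r / fact r"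
  by (simp add: En_def)

lemma En_poly: "En r x = poly (Ep r 1) x"
  by (simp add: En_def poly_Ep)

lemma DERIV_En: "(En (Suc r) has_real_derivative En r x) (at x)"
proof -
  have "(poly (Ep (Suc r) 1) has_real_derivative poly (pderiv (Ep (Suc r) 1)) x) (at x)"
    by (rule poly_DERIV)
  then show ?thesis by (simp add: pderiv_Ep En_poly[abs_def])
qed

lemma En_nonneg: "x \<ge> 0 \<Longrightarrow> En r x \<ge> 0"
  by (auto simp: En_def intro!: sum_nonneg)

lemma En_ge_1: "x \<ge> 0 \<Longrightarrow> En (Suc r) x \<ge> 1"
  by (simp add: En_def sum.lessThan_Suc_shift del: sum.lessThan_Suc) (auto intro!: sum_nonneg)

lemma En_0: "En (Suc r) 0 = 1"
  by (simp add: En_def sum.lessThan_Suc_shift del: sum.lessThan_Suc)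

definition G :: "nat \<Rightarrow> real \<Rightarrow> real" where "G r x = exp (-x) * En r x"

lemma G_nonneg: "x \<ge> 0 \<Longrightarrow> G r x \<ge> 0"
  by (simp add: G_def En_nonneg)

lemma G_0: "G (Suc r) 0 = 1" by (simp add: G_def En_0)

lemma DERIV_G: "(G (Suc r) has_real_derivative (- exp (-x) * x ^ r / fact r)) (at x)"
proof -
  have "((\<lambda>x. exp (-x) * En (Suc r) x) has_real_derivative (- exp (-x) * En (Suc r) x + exp (-x) * En r x)) (at x)"
    by (auto intro!: derivative_eq_intros DERIV_En)
  then show ?thesis unfolding G_def[abs_def] by (simp add: En_Suc algebra_simps)
qed

lemma G_le_1: assumes "x \<ge> 0" shows "G r x \<le> 1"
proof (cases r)
  case 0 then show ?thesis by (simp add: G_def En_def)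
next
  case (Suc r')
  have "G (Suc r') x \<le> G (Suc r') 0"
    by (rule DERIV_nonpos_imp_nonincreasing[OF assms])
       (auto intro!: exI DERIV_G divide_nonneg_nonneg mult_nonneg_nonneg)
  then show ?thesis using Suc by (simp add: G_0)
qed

lemma G_lower: assumes "x \<ge> 0" shows "1 - x ^ Suc r / fact (Suc r) \<le> G (Suc r) x"
proof -
  let ?phi = "\<lambda>x. x ^ Suc r / fact (Suc r) - 1 + G (Suc r) x"
  have d: "(?phi has_real_derivative (x ^ r / fact r - exp (-x) * x ^ r / fact r)) (at x)" for x
  proof -
    have p: "((\<lambda>x. x ^ Suc r) has_real_derivative of_nat (Suc r) * x ^ r) (at x)"
      using DERIV_pow[of "Suc r" x] by simp
    have "(?phi has_real_derivative (of_nat (Suc r) * x ^ r / fact (Suc r) - 0 + (- exp (-x) * x ^ r / fact r))) (at x)"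
      by (intro DERIV_add DERIV_diff DERIV_cdivide p DERIV_G DERIV_const)
    moreover have "of_nat (Suc r) * x ^ r / fact (Suc r) = x ^ r / (fact r :: real)"
      unfolding fact_Suc by (simp del: of_nat_Suc)
    ultimately show ?thesis by simp
  qed
  have "?phi 0 \<le> ?phi x"
  proof (rule DERIV_nonneg_imp_nondecreasing[OF assms])
    fix y :: real assume y: "0 \<le> y"
    have "exp (-y) * y ^ r / fact r \<le> 1 * y ^ r / fact r"
      using y by (intro divide_right_mono mult_right_mono) auto
    then show "\<exists>d. (?phi has_real_derivative d) (at y) \<and> 0 \<le> d"
      using d[of y] by (intro exI[of _ "y ^ r / fact r - exp (-y) * y ^ r / fact r"]) auto
  qed
  then show ?thesis by (simp add: G_0)
qed

lemma fact_ge_pow_div_exp: "(real k / exp 1) ^ k \<le> fact k"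
proof -
  have "real k ^ k / fact k \<le> En (Suc k) (real k)"
    by (simp add: En_Suc En_nonneg)
  also have "\<dots> \<le> exp (real k)"
    using G_le_1[of "real k" "Suc k"] by (simp add: G_def exp_minus field_simps)
  finally have "real k ^ k \<le> exp (real k) * fact k"
    by (simp add: divide_le_eq mult.commute)
  moreover have "exp (real k) = exp 1 ^ k" by (simp add: exp_of_nat_mult[symmetric])
  ultimately show ?thesis by (simp add: power_divide divide_le_eq mult.commute)
qed

definition uu :: "nat \<Rightarrow> real \<Rightarrow> real" where "uu r x = x - ln (En (Suc r) x)"

lemma DERIV_uu:
  assumes "x \<ge> 0"
  shows "(uu r has_real_derivative (x ^ r / fact r) / En (Suc r) x) (at x)"
proof -
  have pos: "En (Suc r) x > 0" using En_ge_1[OF assms, of r] by simp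
  have "(uu r has_real_derivative 1 - (1 / En (Suc r) x) * En r x) (at x)"
    unfolding uu_def[abs_def]
    by (intro DERIV_diff DERIV_ident DERIV_chain2[where f = ln] DERIV_ln_divide pos DERIV_En)
  moreover have "1 - (1 / En (Suc r) x) * En r x = (x ^ r / fact r) / En (Suc r) x"
    using pos by (simp add: En_Suc field_simps)
  ultimately show ?thesis by simp
qed

definition ff :: "nat \<Rightarrow> real \<Rightarrow> real" where
  "ff r x = real (Suc r) * uu r x - x ^ Suc r / (fact r * En (Suc r) x)"

lemma ff_nonneg:
  assumes "x \<ge> 0" shows "ff r x \<ge> 0"
proof -
  have "ff r 0 \<le> ff r x"
  proof (rule DERIV_nonneg_imp_nondecreasing[OF assms])
    fix y :: real assume y: "0 \<le> y"
    have pos: "En (Suc r) y > 0" using En_ge_1[OF y, of r] by simp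
    have fr: "fact r > (0::real)" by simp
    have p: "((\<lambda>x. x ^ Suc r) has_real_derivative of_nat (Suc r) * y ^ r) (at y)"
      using DERIV_pow[of "Suc r" y] by simp
    have d: "(ff r has_real_derivative
      real (Suc r) * ((y ^ r / fact r) / En (Suc r) y) -
      ((of_nat (Suc r) * y ^ r) * (fact r * En (Suc r) y) - y ^ Suc r * (fact r * En r y)) /
         ((fact r * En (Suc r) y) * (fact r * En (Suc r) y))) (at y)"
      unfolding ff_def[abs_def]
      by (intro DERIV_diff DERIV_cmult DERIV_uu y DERIV_divide p DERIV_En) (use pos in simp)
    have "real (Suc r) * ((y ^ r / fact r) / En (Suc r) y) -
      ((of_nat (Suc r) * y ^ r) * (fact r * En (Suc r) y) - y ^ Suc r * (fact r * En r y)) /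
         ((fact r * En (Suc r) y) * (fact r * En (Suc r) y))
      = y ^ Suc r * En r y / (fact r * En (Suc r) y ^ 2)"
      using pos fr by (simp add: field_simps power2_eq_square)
    moreover have "y ^ Suc r * En r y / (fact r * En (Suc r) y ^ 2) \<ge> 0"
      using y pos by (simp add: En_nonneg)
    ultimately show "\<exists>d. (ff r has_real_derivative d) (at y) \<and> 0 \<le> d"
      using d by auto
  qed
  moreover have "ff r 0 = 0" by (simp add: ff_def uu_def En_0)
  ultimately show ?thesis by simp
qed

definition psi :: "nat \<Rightarrow> real \<Rightarrow> real" where "psi r x = uu r x / x ^ Suc r"

lemma psi_antimono:
  assumes "0 < a" "a \<le> b" shows "psi r b \<le> psi r a"
proof (rule DERIV_nonpos_imp_nonincreasing[OF assms(2)])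
  fix y :: real assume y: "a \<le> y" "y \<le> b"
  then have y0: "y > 0" using assms by simp
  have pos: "En (Suc r) y > 0" using En_ge_1[of y r] y0 by simp
  have fr: "fact r > (0::real)" by simp
  have p: "((\<lambda>x. x ^ Suc r) has_real_derivative of_nat (Suc r) * y ^ r) (at y)"
    using DERIV_pow[of "Suc r" y] by simp
  have d: "(psi r has_real_derivative
      (((y ^ r / fact r) / En (Suc r) y) * y ^ Suc r - uu r y * (of_nat (Suc r) * y ^ r)) / (y ^ Suc r * y ^ Suc r)) (at y)"
    unfolding psi_def[abs_def]
    by (intro DERIV_divide DERIV_uu p) (use y0 in simp_all)
  have num: "(((y ^ r / fact r) / En (Suc r) y) * y ^ Suc r - uu r y * (of_nat (Suc r) * y ^ r)) = - (y ^ r * ff r y)"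
    using pos fr by (simp add: ff_def field_simps)
  have "- (y ^ r * ff r y) / (y ^ Suc r * y ^ Suc r) \<le> 0"
    by (rule divide_nonpos_nonneg) (use ff_nonneg[of y r] y0 in auto)
  then show "\<exists>d. (psi r has_real_derivative d) (at y) \<and> d \<le> 0" using d unfolding num by blast
qed

lemma G_eq_exp: "x \<ge> 0 \<Longrightarrow> G (Suc r) x = exp (- uu r x)"
  using En_ge_1[of x r] by (simp add: G_def uu_def exp_diff exp_minus field_simps)

lemma uu_subadd:
  assumes "x > 0" "y > 0" "z > 0" "z ^ Suc r = x ^ Suc r + y ^ Suc r"
  shows "uu r z \<le> uu r x + uu r y"
proof -
  have h1: "x ^ Suc r \<le> z ^ Suc r" using assms(4) zero_less_power[OF assms(2), of "Suc r"] by linarith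
  have h2: "y ^ Suc r \<le> z ^ Suc r" using assms(4) zero_less_power[OF assms(1), of "Suc r"] by linarith
  have xz: "x \<le> z" by (rule power_le_imp_le_base[OF h1]) (use assms in simp)
  have yz: "y \<le> z" by (rule power_le_imp_le_base[OF h2]) (use assms in simp)
  have "uu r z = psi r z * z ^ Suc r" using assms(3) by (simp add: psi_def)
  also have "\<dots> = psi r z * x ^ Suc r + psi r z * y ^ Suc r" by (simp only: assms(4) distrib_left)
  also have "\<dots> \<le> psi r x * x ^ Suc r + psi r y * y ^ Suc r"
    using psi_antimono[OF assms(1) xz, of r] psi_antimono[OF assms(2) yz, of r] assms
    by (intro add_mono mult_right_mono) auto
  also have "\<dots> = uu r x + uu r y" using assms by (simp add: psi_def)
  finally show ?thesis .
qed

lemma root_pow: "a \<ge> 0 \<Longrightarrow> (a powr (1 / real (Suc r))) ^ Suc r = a"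
proof (cases "a = 0")
  case False
  assume "a \<ge> 0"
  then have "a > 0" using False by simp
  then have "(a powr (1 / real (Suc r))) ^ Suc r = (a powr (1 / real (Suc r))) powr real (Suc r)"
    by (subst powr_realpow) auto
  also have "\<dots> = a" using \<open>a > 0\<close> by (simp add: powr_powr)
  finally show ?thesis .
qed simp

definition H :: "nat \<Rightarrow> real \<Rightarrow> real" where "H r a = G (Suc r) (a powr (1 / real (Suc r)))"

lemma H_nonneg: "H r a \<ge> 0"
  unfolding H_def by (rule G_nonneg) simp

lemma H_0: "H r 0 = 1" by (simp add: H_def G_0)

lemma H_supermult:
  assumes "a \<ge> 0" "b \<ge> 0" shows "H r a * H r b \<le> H r (a + b)"
proof (cases "a = 0 \<or> b = 0")
  case True then show ?thesis by (auto simp: H_0)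
next
  case False
  then have a: "a > 0" and b: "b > 0" using assms by auto
  define x y z where "x = a powr (1 / real (Suc r))" and "y = b powr (1 / real (Suc r))"
    and "z = (a + b) powr (1 / real (Suc r))"
  have pos: "x > 0" "y > 0" "z > 0" using a b by (simp_all add: x_def y_def z_def)
  have "x ^ Suc r = a" unfolding x_def by (rule root_pow) (use a in simp)
  moreover have "y ^ Suc r = b" unfolding y_def by (rule root_pow) (use b in simp)
  moreover have "z ^ Suc r = a + b" unfolding z_def by (rule root_pow) (use a b in simp)
  ultimately have "z ^ Suc r = x ^ Suc r + y ^ Suc r" by simp
  then have "uu r z \<le> uu r x + uu r y" by (rule uu_subadd[OF pos])
  then have "exp (- uu r x) * exp (- uu r y) \<le> exp (- uu r z)"
    by (simp add: exp_add[symmetric])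
  then show ?thesis using pos
    unfolding H_def x_def[symmetric] y_def[symmetric] z_def[symmetric] by (simp add: G_eq_exp)
qed

lemma H_prod:
  assumes "finite A" "\<And>i. i \<in> A \<Longrightarrow> a i \<ge> 0"
  shows "(\<Prod>i\<in>A. H r (a i)) \<le> H r (\<Sum>i\<in>A. a i)"
  using assms
proof (induction A rule: finite_induct)
  case empty then show ?case by (simp add: H_0)
next
  case (insert x F)
  have "(\<Prod>i\<in>insert x F. H r (a i)) = H r (a x) * (\<Prod>i\<in>F. H r (a i))"
    using insert by simp
  also have "\<dots> \<le> H r (a x) * H r (\<Sum>i\<in>F. a i)"
    using insert by (intro mult_left_mono H_nonneg) auto
  also have "\<dots> \<le> H r (a x + (\<Sum>i\<in>F. a i))"
    using insert by (intro H_supermult sum_nonneg) auto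
  finally show ?case using insert by simp
qed


lemma pow_root: "y \<ge> 0 \<Longrightarrow> (y ^ Suc r) powr (1 / real (Suc r)) = y"
proof (cases "y = 0")
  case False
  assume "y \<ge> 0"
  then have y: "y > 0" using False by simp
  then have "(y ^ Suc r) powr (1 / real (Suc r)) = (y powr real (Suc r)) powr (1 / real (Suc r))"
    by (subst powr_realpow) auto
  also have "\<dots> = y" using y by (simp add: powr_powr)
  finally show ?thesis .
qed simp

lemma H_pow: assumes "y \<ge> 0" shows "H r (y ^ Suc r) = G (Suc r) y"
  unfolding H_def by (subst pow_root) (use assms in auto)

lemma weierstrass:
  assumes "finite A" "\<And>i. i \<in> A \<Longrightarrow> 0 \<le> a i \<and> a i \<le> (1::real)"
  shows "1 - (\<Sum>i\<in>A. a i) \<le> (\<Prod>i\<in>A. 1 - a i)"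
  using assms
proof (induction A rule: finite_induct)
  case (insert x F)
  have ax: "0 \<le> a x" "a x \<le> 1" using insert by auto
  have sF: "0 \<le> (\<Sum>i\<in>F. a i)" using insert by (intro sum_nonneg) auto
  have IH: "1 - (\<Sum>i\<in>F. a i) \<le> (\<Prod>i\<in>F. 1 - a i)" using insert by auto
  have "1 - (\<Sum>i\<in>insert x F. a i) \<le> (1 - a x) * (1 - (\<Sum>i\<in>F. a i))"
    using insert ax sF by (simp add: algebra_simps)
  also have "\<dots> \<le> (1 - a x) * (\<Prod>i\<in>F. 1 - a i)"
    using ax IH by (intro mult_left_mono) auto
  finally show ?case using insert by simp
qed simp

lemma G_integral:
  assumes s: "s > 0"
  shows "(\<integral>\<^sup>+t. ennreal (G k (s * t)) * indicator {0..} t \<partial>lborel) = ennreal (real k / s)"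
proof -
  have eq: "ennreal (G k (s * t)) * indicator {0..} t = (\<Sum>j<k. ennreal (1 / s) * ennreal (erlang_density j s t))" for t
  proof (cases "t \<ge> 0")
    case True
    have "G k (s * t) = (\<Sum>j<k. (1 / s) * erlang_density j s t)"
      using True s unfolding G_def En_def erlang_density_def
      by (simp add: sum_distrib_left power_mult_distrib field_simps)
    then show ?thesis using True s
      by (simp add: ennreal_mult[symmetric] sum_nonneg)
  qed (simp add: erlang_density_def)
  have one: "(\<integral>\<^sup>+t. ennreal (erlang_density j s t) \<partial>lborel) = 1" for j
    using nn_integral_erlang_ith_moment[OF s, of j 0] by simp
  have "(\<integral>\<^sup>+t. ennreal (G k (s * t)) * indicator {0..} t \<partial>lborel) =
      (\<Sum>j<k. ennreal (1 / s) * (\<integral>\<^sup>+t. ennreal (erlang_density j s t) \<partial>lborel))"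
    unfolding eq by (subst nn_integral_sum) (auto simp: nn_integral_cmult)
  also have "\<dots> = ennreal (real k / s)"
    using s by (simp add: one ennreal_of_nat_eq_real_of_nat ennreal_mult[symmetric])
  finally show ?thesis .
qed

lemma poly_integral:
  fixes S :: real and r :: nat
  assumes S: "S > 0"
  defines "x0 \<equiv> (fact (Suc r) / S) powr (1 / real (Suc r))"
  shows "(\<integral>\<^sup>+t. ennreal (1 - S * t ^ Suc r / fact (Suc r)) * indicator {0..x0} t \<partial>lborel)
     = ennreal (x0 * real (Suc r) / real (Suc (Suc r)))"
proof -
  let ?h = "\<lambda>t. 1 - S * t ^ Suc r / fact (Suc r)"
  let ?F = "\<lambda>t. t - S * t ^ Suc (Suc r) / (real (Suc (Suc r)) * fact (Suc r))"
  have x0: "x0 \<ge> 0" unfolding x0_def by simp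
  have x0k: "x0 ^ Suc r = fact (Suc r) / S"
    unfolding x0_def by (rule root_pow) (use S in simp)
  have s1: "S * x0 ^ Suc r = fact (Suc r)" using S x0k by simp
  have dF: "(?F has_real_derivative ?h t) (at t)" for t
  proof -
    have p: "((\<lambda>x. x ^ Suc (Suc r)) has_real_derivative of_nat (Suc (Suc r)) * t ^ Suc r) (at t)"
      using DERIV_pow[of "Suc (Suc r)" t] by simp
    have "(?F has_real_derivative 1 - S * (of_nat (Suc (Suc r)) * t ^ Suc r) / (real (Suc (Suc r)) * fact (Suc r))) (at t)"
      by (intro DERIV_diff DERIV_ident DERIV_cdivide DERIV_cmult p)
    moreover have "S * (of_nat (Suc (Suc r)) * t ^ Suc r) / (real (Suc (Suc r)) * fact (Suc r)) = S * t ^ Suc r / fact (Suc r)"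
      by (simp del: of_nat_Suc)
    ultimately show ?thesis by simp
  qed
  have dFv: "(?F has_vector_derivative ?h t) (at t within {0..x0})" for t
    unfolding has_real_derivative_iff_has_vector_derivative[symmetric]
    by (rule has_field_derivative_at_within[OF dF])
  have "(?h has_integral (?F x0 - ?F 0)) {0..x0}"
    by (rule fundamental_theorem_of_calculus[OF x0 dFv])
  moreover have "?F x0 - ?F 0 = x0 * real (Suc r) / real (Suc (Suc r))"
  proof -
    have e: "S * x0 ^ Suc (Suc r) = fact (Suc r) * x0"
      using s1 by (simp only: power_Suc) (simp add: mult_ac)
    have "?F x0 = x0 - fact (Suc r) * x0 / (real (Suc (Suc r)) * fact (Suc r))" by (simp only: e)
    also have "\<dots> = x0 - x0 / real (Suc (Suc r))" by simp
    also have "\<dots> = x0 * real (Suc r) / real (Suc (Suc r))"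
      by (simp add: field_simps del: of_nat_Suc) (simp add: algebra_simps)
    finally have "?F x0 = x0 * real (Suc r) / real (Suc (Suc r))" .
    moreover have "?F 0 = 0" by simp
    ultimately show ?thesis by linarith
  qed
  moreover have "0 \<le> ?h t" if t: "t \<in> {0..x0}" for t
  proof -
    have "t ^ Suc r \<le> x0 ^ Suc r" using t by (intro power_mono) auto
    then have "S * t ^ Suc r \<le> S * x0 ^ Suc r" using S by (intro mult_left_mono) auto
    then have "S * t ^ Suc r / fact (Suc r) \<le> 1" using s1 by (simp add: divide_le_eq)
    then show ?thesis by linarith
  qed
  ultimately show ?thesis
    by (intro nn_integral_has_integral_lebesgue') auto
qed


theorem corollary6:
  fixes m k :: nat and P :: "nat pmf"
  assumes "m \<ge> 1" and "k \<ge> 1" and "set_pmf P \<subseteq> {1..m}"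
  defines "normk \<equiv> (\<Sum>i=1..m. pmf P i ^ k) powr (1 / real k)"
  shows "(1 / exp 1) * (real k / (real k + 1)) * (real k / normk)
           \<le> (\<integral>\<omega>. real (balls_until k \<omega>) \<partial>stream_space (measure_pmf P))
       \<and> (\<integral>\<omega>. real (balls_until k \<omega>) \<partial>stream_space (measure_pmf P)) \<le> real k / normk"
proof -
  obtain r where k: "k = Suc r" using assms(2) by (cases k) auto
  define p where "p = pmf P"
  define S where "S = (\<Sum>i\<in>{1..m}. p i ^ k)"
  define s where "s = S powr (1 / real k)"
  define \<Lambda> where "\<Lambda> = Lf (Fp p m k (\<lambda>_. 0))"
  have p0: "\<And>i. p i \<ge> 0" by (simp add: p_def)
  have ns: "normk = s" by (simp add: normk_def s_def S_def p_def)
  have psum: "(\<Sum>i\<in>{1..m}. p i) = 1" unfolding p_def by (rule sum_pmf_eq_1) (use assms(3) in auto)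
  have S0: "S > 0"
  proof (rule ccontr)
    assume "\<not> S > 0"
    moreover have "S \<ge> 0" unfolding S_def using p0 by (intro sum_nonneg) auto
    ultimately have "S = 0" by simp
    then have "\<forall>i\<in>{1..m}. p i ^ k = 0" unfolding S_def using p0 by (subst (asm) sum_nonneg_eq_0_iff) auto
    then have "\<forall>i\<in>{1..m}. p i = 0" by simp
    then show False using psum by simp
  qed
  have s0: "s > 0" using S0 by (simp add: s_def)
  have sk: "s ^ k = S" unfolding s_def k by (rule root_pow) (use S0 in simp)
  have ET: "(\<integral>\<omega>. real (balls_until k \<omega>) \<partial>stream_space (measure_pmf P)) = \<Lambda>"
    unfolding \<Lambda>_def p_def by (rule integral_balls_until) (use assms in auto)
  have L0: "\<Lambda> \<ge> 0" unfolding \<Lambda>_def by (intro Lf_nonneg nnc_Fp p0)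
  have Lint: "ennreal \<Lambda> = (\<integral>\<^sup>+t. ennreal (exp (-t) * (\<Prod>i\<in>{1..m}. (\<Sum>j<k. (p i * t) ^ j / fact j))) * indicator {0..} t \<partial>lborel)"
    unfolding \<Lambda>_def by (rule Lf_Fp0_integral[OF p0])
  have pt: "exp (-t) * (\<Prod>i\<in>{1..m}. (\<Sum>j<k. (p i * t) ^ j / fact j)) = (\<Prod>i\<in>{1..m}. G k (p i * t))" for t
  proof -
    have "exp (-t) = exp (\<Sum>i\<in>{1..m}. - (p i * t))"
      using psum by (simp add: sum_negf sum_distrib_right[symmetric])
    also have "\<dots> = (\<Prod>i\<in>{1..m}. exp (- (p i * t)))" by (rule exp_sum) simp
    finally show ?thesis by (simp add: G_def En_def prod.distrib)
  qed
  have up: "(\<Prod>i\<in>{1..m}. G k (p i * t)) \<le> G k (s * t)" if t: "t \<ge> 0" for t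
  proof -
    have "(\<Prod>i\<in>{1..m}. G k (p i * t)) = (\<Prod>i\<in>{1..m}. H r ((p i * t) ^ Suc r))"
      using t p0 by (intro prod.cong refl) (metis H_pow k mult_nonneg_nonneg)
    also have "\<dots> \<le> H r (\<Sum>i\<in>{1..m}. (p i * t) ^ Suc r)"
      by (rule H_prod) (use t p0 in auto)
    also have "(\<Sum>i\<in>{1..m}. (p i * t) ^ Suc r) = (s * t) ^ Suc r"
      using sk by (simp add: k S_def power_mult_distrib sum_distrib_right del: power_Suc)
    also have "H r ((s * t) ^ Suc r) = G k (s * t)"
      using s0 t by (metis H_pow k mult_nonneg_nonneg less_imp_le)
    finally show ?thesis .
  qed
  have "ennreal \<Lambda> \<le> (\<integral>\<^sup>+t. ennreal (G k (s * t)) * indicator {0..} t \<partial>lborel)"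
    unfolding Lint pt
  proof (intro nn_integral_mono)
    fix t :: real
    show "ennreal (\<Prod>i\<in>{1..m}. G k (p i * t)) * indicator {0..} t \<le> ennreal (G k (s * t)) * indicator {0..} t"
      using up[of t] by (cases "t \<ge> 0") (auto simp: indicator_def intro: ennreal_leI)
  qed
  also have "\<dots> = ennreal (real k / s)" by (rule G_integral[OF s0])
  finally have upper: "\<Lambda> \<le> real k / s"
    using s0 by (subst (asm) ennreal_le_iff) auto
  define x0 where "x0 = (fact k / S) powr (1 / real k)"
  have low: "1 - S * t ^ k / fact k \<le> (\<Prod>i\<in>{1..m}. G k (p i * t))" if t: "t \<ge> 0" for t
  proof -
    have a: "0 \<le> 1 - G k (p i * t) \<and> 1 - G k (p i * t) \<le> 1" for i
      using G_le_1[of "p i * t" k] G_nonneg[of "p i * t" k] t p0[of i] by auto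
    have b: "1 - G k (p i * t) \<le> (p i * t) ^ k / fact k" for i
      using G_lower[of "p i * t" r] t p0[of i] by (simp add: k)
    have "1 - S * t ^ k / fact k = 1 - (\<Sum>i\<in>{1..m}. (p i * t) ^ k / fact k)"
      by (simp add: S_def power_mult_distrib sum_distrib_right sum_divide_distrib)
    also have "\<dots> \<le> 1 - (\<Sum>i\<in>{1..m}. 1 - G k (p i * t))"
      using b by (intro diff_left_mono sum_mono) auto
    also have "\<dots> \<le> (\<Prod>i\<in>{1..m}. 1 - (1 - G k (p i * t)))"
      by (rule weierstrass) (use a in auto)
    finally show ?thesis by simp
  qed
  have "ennreal (x0 * real (Suc r) / real (Suc (Suc r))) =
      (\<integral>\<^sup>+t. ennreal (1 - S * t ^ Suc r / fact (Suc r)) * indicator {0..x0} t \<partial>lborel)"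
    unfolding x0_def k by (rule poly_integral[OF S0, symmetric])
  also have "\<dots> \<le> ennreal \<Lambda>"
    unfolding Lint pt
  proof (intro nn_integral_mono)
    fix t :: real
    show "ennreal (1 - S * t ^ Suc r / fact (Suc r)) * indicator {0..x0} t \<le> ennreal (\<Prod>i\<in>{1..m}. G k (p i * t)) * indicator {0..} t"
      using low[of t] by (cases "t \<ge> 0") (auto simp: indicator_def k intro: ennreal_leI)
  qed
  finally have lower: "x0 * real k / (real k + 1) \<le> \<Lambda>"
    using L0 by (subst (asm) ennreal_le_iff) (auto simp: k)
  have "x0 = fact k powr (1 / real k) / s"
    unfolding x0_def s_def using S0 by (simp add: powr_divide)
  moreover have "real k / exp 1 \<le> fact k powr (1 / real k)"
  proof -
    have "((real k / exp 1) ^ Suc r) powr (1 / real (Suc r)) \<le> (fact k) powr (1 / real (Suc r))"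
      using fact_ge_pow_div_exp[of k] by (intro powr_mono2) (auto simp: k)
    moreover have "((real k / exp 1) ^ Suc r) powr (1 / real (Suc r)) = real k / exp 1"
      by (rule pow_root) simp
    ultimately show ?thesis unfolding k by simp
  qed
  ultimately have "(real k / exp 1) / s \<le> x0"
    using s0 by (metis divide_right_mono less_imp_le)
  then have "(real k / (real k + 1)) * ((real k / exp 1) / s) \<le> (real k / (real k + 1)) * x0"
    by (intro mult_left_mono) auto
  moreover have "(1 / exp 1) * (real k / (real k + 1)) * (real k / s) = (real k / (real k + 1)) * ((real k / exp 1) / s)"
    by simp
  moreover have "(real k / (real k + 1)) * x0 = x0 * real k / (real k + 1)" by simp
  ultimately have "(1 / exp 1) * (real k / (real k + 1)) * (real k / s) \<le> \<Lambda>"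
    using lower by linarith
  then show ?thesis using upper ET ns by simp
qed


end
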